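(* Let $R$ be a commutative ring, $M$ an $R$-module, $C$ an $R$-linear relation on $M$, and $(X\mid\rho)$ a reduction of $(M,C)$. Then $\rho$ defines a morphism $(X,\mathrm{graph}(T_X))\to(M,C)$ in $\mathrm{Rel}_R$, where $T_X(x)=Tx$. Furthermore, if $(X\mid\rho)$ meets in the radical, then there is a short exact sequence of $R[T,T^{-1}]$-modules $0\to\mathrm{rad}(X)\to X\to C^\sharp/C^\flat\to0$, where the first map is the inclusion and the second is $x\mapsto\rho(x)+C^\flat$.
   Context: An $R$-linear relation on $M$ is a submodule $C\subseteq M\oplus M$; $Cm=\{m':(m,m')\in C\}$, $C^{-1}=\{(y,x):(x,y)\in C\}$, $\mathrm{graph}(f)=\{(x,f(x))\}$. $\mathrm{Rel}_R$: objects pairs $(M,C)$, morphisms $(L,B)\to(M,C)$ the $R$-linear $f$ with $(f(x),f(y))\in C$ whenever $(x,y)\in B$. $C''$: the $m\in M$ admitting $(m_n)_{n\in\mathbb{N}}$ with $m_0=m$, $m_{n+1}\in Cm_n$ for all $n$; $C'$: those admitting such a sequence with $m_n=0$ for $n\gg0$; $C^\sharp=C''\cap(C^{-1})''$, $C^\flat=C''\cap(C^{-1})'+(C^{-1})''\cap C'$. $C^\sharp/C^\flat$ is an $R[T,T^{-1}]$-module with $T$ acting by the automorphism $m+C^\flat\mapsto m'+C^\flat$ where $m'\in C^\sharp\cap(C^\flat+Cm)$. A reduction of $(M,C)$ is a pair $(X\mid\rho)$, $X$ an $R[T,T^{-1}]$-module, $\rho\colon X\to M$ $R$-linear, with $C^\sharp=C^\flat+\mathrm{im}(\rho)$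 and $\rho(Tx)\in C\rho(x)$ for all $x$; it meets in the radical if $\{x\in X:\rho(x)\in C^\flat\}=\mathrm{rad}(X)$, the radical of $X$ as an $R$-module. *)

theory Defs
  imports Complex_Main
begin

text \<open>Modules over a commutative ring R are modelled with the Main locale
  module (scale function), the module being the whole carrier type.\<close>

definition linrel :: "('r::comm_ring_1 \<Rightarrow> 'm::ab_group_add \<Rightarrow> 'm) \<Rightarrow> ('m \<times> 'm) set \<Rightarrow> bool" where
  "linrel s C \<longleftrightarrow> (0, 0) \<in> C
     \<and> (\<forall>a b c d. (a, b) \<in> C \<longrightarrow> (c, d) \<in> C \<longrightarrow> (a + c, b + d) \<in> C)
     \<and> (\<forall>r a b. (a, b) \<in> C \<longrightarrow> (s r a, s r b) \<in> C)"

definition graph :: "('a \<Rightarrow> 'b) \<Rightarrow> ('a \<times> 'b) set" where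
  "graph f = {(x, f x) | x. True}"

definition rel_morphism ::
  "('r::comm_ring_1 \<Rightarrow> 'l::ab_group_add \<Rightarrow> 'l) \<Rightarrow> ('l \<times> 'l) set \<Rightarrow>
   ('r \<Rightarrow> 'm::ab_group_add \<Rightarrow> 'm) \<Rightarrow> ('m \<times> 'm) set \<Rightarrow> ('l \<Rightarrow> 'm) \<Rightarrow> bool" where
  "rel_morphism sL B sM C f \<longleftrightarrow> module_hom sL sM f \<and> (\<forall>x y. (x, y) \<in> B \<longrightarrow> (f x, f y) \<in> C)"

definition dprime :: "('m \<times> 'm) set \<Rightarrow> 'm set" where
  "dprime C = {m. \<exists>f :: nat \<Rightarrow> 'm. f 0 = m \<and> (\<forall>n. (f n, f (Suc n)) \<in> C)}"

definition sprime :: "('m::zero \<times> 'm) set \<Rightarrow> 'm set" where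
  "sprime C = {m. \<exists>f :: nat \<Rightarrow> 'm. f 0 = m \<and> (\<forall>n. (f n, f (Suc n)) \<in> C)
                    \<and> (\<exists>N. \<forall>n\<ge>N. f n = 0)}"

definition set_plus :: "'m::plus set \<Rightarrow> 'm set \<Rightarrow> 'm set" where
  "set_plus A B = {a + b | a b. a \<in> A \<and> b \<in> B}"

definition Csharp :: "('m \<times> 'm) set \<Rightarrow> 'm set" where
  "Csharp C = dprime C \<inter> dprime (C\<inverse>)"

definition Cflat :: "('m::monoid_add \<times> 'm) set \<Rightarrow> 'm set" where
  "Cflat C = set_plus (dprime C \<inter> sprime (C\<inverse>)) (dprime (C\<inverse>) \<inter> sprime C)"

text \<open>The quotient C^sharp / C^flat, realised as the set of cosets m + C^flat.\<close>
definition coset :: "('m::monoid_add \<times> 'm) set \<Rightarrow> 'm \<Rightarrow> 'm set" where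
  "coset C m = {m + c | c. c \<in> Cflat C}"

definition quot_carrier :: "('m::monoid_add \<times> 'm) set \<Rightarrow> 'm set set" where
  "quot_carrier C = coset C ` Csharp C"

text \<open>The action of T on C^sharp/C^flat: the class m + C^flat is sent to the class of
  any m' in C^sharp \<inter> (C^flat + C m); as a set this is the union over all representatives.\<close>
definition quot_T :: "('m::monoid_add \<times> 'm) set \<Rightarrow> 'm set \<Rightarrow> 'm set" where
  "quot_T C q = {m'. m' \<in> Csharp C \<and> (\<exists>m\<in>q. m' \<in> set_plus (Cflat C) (C `` {m}))}"

text \<open>An R[T,T^-1]-module: an R-module with an R-linear automorphism T.\<close>
definition laurent_module :: "('r::comm_ring_1 \<Rightarrow> 'x::ab_group_add \<Rightarrow> 'x) \<Rightarrow> ('x \<Rightarrow> 'x) \<Rightarrow> bool" where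
  "laurent_module s T \<longleftrightarrow> module s \<and> module_hom s s T \<and> bij T"

definition reduction ::
  "('r::comm_ring_1 \<Rightarrow> 'm::ab_group_add \<Rightarrow> 'm) \<Rightarrow> ('m \<times> 'm) set \<Rightarrow>
   ('r \<Rightarrow> 'x::ab_group_add \<Rightarrow> 'x) \<Rightarrow> ('x \<Rightarrow> 'x) \<Rightarrow> ('x \<Rightarrow> 'm) \<Rightarrow> bool" where
  "reduction sM C sX T \<rho> \<longleftrightarrow> laurent_module sX T \<and> module_hom sX sM \<rho>
     \<and> Csharp C = set_plus (Cflat C) (range \<rho>)
     \<and> (\<forall>x. \<rho> (T x) \<in> C `` {\<rho> x})"

text \<open>Radical of an R-module (whole type): intersection of all maximal submodules
  (the whole module if there are none).\<close>
definition maximal_submodule :: "('r::comm_ring_1 \<Rightarrow> 'x::ab_group_add \<Rightarrow> 'x) \<Rightarrow> 'x set \<Rightarrow> bool" where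
  "maximal_submodule s N \<longleftrightarrow> module.subspace s N \<and> N \<noteq> UNIV
     \<and> (\<forall>N'. module.subspace s N' \<longrightarrow> N \<subseteq> N' \<longrightarrow> N' = N \<or> N' = UNIV)"

definition rad :: "('r::comm_ring_1 \<Rightarrow> 'x::ab_group_add \<Rightarrow> 'x) \<Rightarrow> 'x set" where
  "rad s = \<Inter> {N. maximal_submodule s N}"

definition meets_in_radical ::
  "('m::ab_group_add \<times> 'm) set \<Rightarrow> ('r::comm_ring_1 \<Rightarrow> 'x::ab_group_add \<Rightarrow> 'x) \<Rightarrow> ('x \<Rightarrow> 'm) \<Rightarrow> bool" where
  "meets_in_radical C sX \<rho> \<longleftrightarrow> {x. \<rho> x \<in> Cflat C} = rad sX"

end

theory Submission
  imports Defs
begin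

lemma Cflat_conv: "Cflat (C\<inverse>) = Cflat (C::('a::ab_group_add \<times> 'a) set)"
  proof -
  have comm: "set_plus A B = set_plus B A" for A B :: "'a set"
    unfolding set_plus_def
    apply auto
    apply (rule_tac x=b in exI, rule_tac x=a in exI, simp add: add.commute)+
    done
  show ?thesis unfolding Cflat_def converse_converse by (rule comm)
qed


context module begin

lemma linrel_neg: "linrel scale C \<Longrightarrow> (a,b) \<in> C \<Longrightarrow> (-a,-b) \<in> C"
  unfolding linrel_def by (metis scale_minus_left scale_one)

lemma linrel_add: "linrel scale C \<Longrightarrow> (a,b) \<in> C \<Longrightarrow> (c,d) \<in> C \<Longrightarrow> (a+c,b+d) \<in> C"
  unfolding linrel_def by blast

lemma linrel_diff: "linrel scale C \<Longrightarrow> (a,b) \<in> C \<Longrightarrow> (c,d) \<in> C \<Longrightarrow> (a-c,b-d) \<in> C"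
  using linrel_add[of C a b "-c" "-d"] linrel_neg[of C c d] by simp

lemma linrel_conv: "linrel scale C \<Longrightarrow> linrel scale (C\<inverse>)"
  unfolding linrel_def by auto

lemma subspace_dprime: assumes "linrel scale C" shows "subspace (dprime C)"
  unfolding subspace_def
proof (intro conjI ballI allI)
  show "0 \<in> dprime C" unfolding dprime_def using assms unfolding linrel_def
    by (intro CollectI exI[of _ "\<lambda>_. 0"]) auto
next
  fix c x assume "x \<in> dprime C"
  then obtain f where f: "f 0 = x" "\<forall>n. (f n, f (Suc n)) \<in> C" unfolding dprime_def by auto
  show "c *s x \<in> dprime C" unfolding dprime_def
    using f assms unfolding linrel_def
    by (intro CollectI exI[of _ "\<lambda>n. c *s f n"]) auto
next
  fix x y assume "x \<in> dprime C" "y \<in> dprime C"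
  then obtain f g where f: "f 0 = x" "\<forall>n. (f n, f (Suc n)) \<in> C"
     and g: "g 0 = y" "\<forall>n. (g n, g (Suc n)) \<in> C" unfolding dprime_def by auto
  show "x + y \<in> dprime C" unfolding dprime_def
    using f g assms unfolding linrel_def
    by (intro CollectI exI[of _ "\<lambda>n. f n + g n"]) auto
qed

lemma subspace_sprime: assumes "linrel scale C" shows "subspace (sprime C)"
  unfolding subspace_def
proof (intro conjI ballI allI)
  show "0 \<in> sprime C" unfolding sprime_def using assms unfolding linrel_def
    by (intro CollectI exI[of _ "\<lambda>_. 0"]) auto
next
  fix c x assume "x \<in> sprime C"
  then obtain f N where f: "f 0 = x" "\<forall>n. (f n, f (Suc n)) \<in> C" "\<forall>n\<ge>N. f n = 0" unfolding sprime_def by auto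
  show "c *s x \<in> sprime C" unfolding sprime_def
    using f assms unfolding linrel_def
    by (intro CollectI exI[of _ "\<lambda>n. c *s f n"] conjI exI[of _ N]) auto
next
  fix x y assume "x \<in> sprime C" "y \<in> sprime C"
  then obtain f g N K where f: "f 0 = x" "\<forall>n. (f n, f (Suc n)) \<in> C" "\<forall>n\<ge>N. f n = 0"
     and g: "g 0 = y" "\<forall>n. (g n, g (Suc n)) \<in> C" "\<forall>n\<ge>K. g n = 0" unfolding sprime_def by auto
  show "x + y \<in> sprime C" unfolding sprime_def
    using f g assms unfolding linrel_def
    by (intro CollectI exI[of _ "\<lambda>n. f n + g n"] conjI exI[of _ "max N K"]) auto
qed

lemma sprime_sub: "sprime C \<subseteq> dprime C"
  unfolding sprime_def dprime_def by auto

lemma subspace_set_plus: assumes "subspace A" "subspace B" shows "subspace (set_plus A B)"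
  unfolding subspace_def set_plus_def
proof (intro conjI ballI allI)
  show "0 \<in> {a + b |a b. a \<in> A \<and> b \<in> B}" using assms subspace_0 by force
next
  fix c x assume "x \<in> {a + b |a b. a \<in> A \<and> b \<in> B}"
  then obtain a b where "x = a + b" "a \<in> A" "b \<in> B" by auto
  then show "c *s x \<in> {a + b |a b. a \<in> A \<and> b \<in> B}"
    using assms subspace_scale by (force simp: scale_right_distrib)
next
  fix x y assume "x \<in> {a + b |a b. a \<in> A \<and> b \<in> B}" "y \<in> {a + b |a b. a \<in> A \<and> b \<in> B}"
  then obtain a b a' b' where "x = a + b" "a \<in> A" "b \<in> B" "y = a' + b'" "a' \<in> A" "b' \<in> B" by auto
  then show "x + y \<in> {a + b |a b. a \<in> A \<and> b \<in> B}"
    using assms subspace_add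
    by (intro CollectI exI[of _ "a + a'"] exI[of _ "b + b'"]) (auto simp: ac_simps)
qed

lemma subspace_Csharp: "linrel scale C \<Longrightarrow> subspace (Csharp C)"
  unfolding Csharp_def by (intro subspace_inter subspace_dprime linrel_conv)

lemma subspace_Cflat: "linrel scale C \<Longrightarrow> subspace (Cflat C)"
  unfolding Cflat_def by (intro subspace_inter subspace_dprime subspace_sprime
     linrel_conv subspace_set_plus)

lemma Cflat_sub: assumes "linrel scale C" shows "Cflat C \<subseteq> Csharp C"
proof
  fix x assume "x \<in> Cflat C"
  then obtain a b where "x = a + b" "a \<in> dprime C \<inter> sprime (C\<inverse>)" "b \<in> dprime (C\<inverse>) \<inter> sprime C"
    unfolding Cflat_def set_plus_def by auto
  then have "a \<in> Csharp C" "b \<in> Csharp C" using sprime_sub unfolding Csharp_def by auto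
  then show "x \<in> Csharp C" using \<open>x = a + b\<close> subspace_add subspace_Csharp assms by auto
qed

lemma Csharp_conv: "Csharp (C\<inverse>) = Csharp C"
  unfolding Csharp_def by auto

lemma shift_d: "\<forall>n. (f n, f (Suc n)) \<in> C \<Longrightarrow> f (Suc 0) \<in> dprime C"
  unfolding dprime_def by (intro CollectI exI[of _ "\<lambda>n. f (Suc n)"]) auto

lemma shift_s: "\<forall>n. (f n, f (Suc n)) \<in> C \<Longrightarrow> \<forall>n\<ge>N. f n = 0 \<Longrightarrow> f (Suc 0) \<in> sprime C"
  unfolding sprime_def by (intro CollectI exI[of _ "\<lambda>n. f (Suc n)"] conjI exI[of _ N]) auto

lemma cons_d: assumes "a \<in> dprime D" "(b, a) \<in> D" shows "b \<in> dprime D"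
proof -
  obtain f where f: "f 0 = a" "\<forall>n. (f n, f (Suc n)) \<in> D" using assms unfolding dprime_def by auto
  show ?thesis unfolding dprime_def
    using f assms by (intro CollectI exI[of _ "\<lambda>n. case n of 0 \<Rightarrow> b | Suc m \<Rightarrow> f m"]) (auto split: nat.split)
qed

lemma cons_s: assumes "a \<in> sprime D" "(b, a) \<in> D" shows "b \<in> sprime D"
proof -
  obtain f N where f: "f 0 = a" "\<forall>n. (f n, f (Suc n)) \<in> D" "\<forall>n\<ge>N. f n = 0" using assms unfolding sprime_def by auto
  show ?thesis unfolding sprime_def
    using f assms by (intro CollectI exI[of _ "\<lambda>n. case n of 0 \<Rightarrow> b | Suc m \<Rightarrow> f m"] conjI exI[of _ "Suc N"])
      (auto split: nat.split)
qed

lemma key: assumes L: "linrel scale C" and c: "c \<in> Cflat C" and d: "d \<in> Csharp C" and cd: "(c, d) \<in> C"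
  shows "d \<in> Cflat C"
proof -
  obtain a b where ab: "c = a + b" "a \<in> dprime C \<inter> sprime (C\<inverse>)" "b \<in> dprime (C\<inverse>) \<inter> sprime C"
    using c unfolding Cflat_def set_plus_def by auto
  obtain f where f: "f 0 = a" "\<forall>n. (f n, f (Suc n)) \<in> C" using ab unfolding dprime_def by auto
  obtain g N where g: "g 0 = b" "\<forall>n. (g n, g (Suc n)) \<in> C" "\<forall>n\<ge>N. g n = 0" using ab unfolding sprime_def by auto
  have a1: "f (Suc 0) \<in> dprime C \<inter> sprime (C\<inverse>)"
    using shift_d[OF f(2)] cons_s[of a "C\<inverse>" "f (Suc 0)"] ab f by (metis IntD2 IntI converse_iff)
  have b1: "g (Suc 0) \<in> dprime (C\<inverse>) \<inter> sprime C"
    using shift_s[OF g(2,3)] cons_d[of b "C\<inverse>" "g (Suc 0)"] ab g by (metis IntD1 IntI converse_iff)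
  have s: "f (Suc 0) + g (Suc 0) \<in> Cflat C" using a1 b1 unfolding Cflat_def set_plus_def by auto
  define d' where "d' = d - (f (Suc 0) + g (Suc 0))"
  have "(c - (a + b), d') \<in> C" unfolding d'_def
    using linrel_diff[OF L cd linrel_add[OF L, of a "f (Suc 0)" b "g (Suc 0)"]] f g by auto
  then have d0: "(0, d') \<in> C" using ab by simp
  have "d' \<in> Csharp C" unfolding d'_def
    using subspace_diff[OF subspace_Csharp[OF L] d] s Cflat_sub[OF L] by auto
  then have "d' \<in> dprime C" unfolding Csharp_def by auto
  moreover have "d' \<in> sprime (C\<inverse>)" unfolding sprime_def
    using d0 L unfolding linrel_def
    by (intro CollectI exI[of _ "\<lambda>n. if n = 0 then d' else 0"] conjI exI[of _ 1]) auto
  ultimately have "d' \<in> Cflat C" unfolding Cflat_def set_plus_def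
    using subspace_0[OF subspace_sprime[OF L]] subspace_dprime[OF linrel_conv[OF L]]
    by (intro CollectI exI[of _ d'] exI[of _ 0]) (auto intro: subspace_0)
  then show ?thesis unfolding d'_def using subspace_add[OF subspace_Cflat[OF L] _ s, of d'] d'_def by simp
qed

lemma coset_eq: assumes L: "linrel scale C" shows "coset C x = coset C y \<longleftrightarrow> x - y \<in> Cflat C"
proof
  assume "coset C x = coset C y"
  moreover have "x \<in> coset C x" unfolding coset_def using subspace_0[OF subspace_Cflat[OF L]] by force
  ultimately obtain c where "x = y + c" "c \<in> Cflat C" unfolding coset_def by auto
  then show "x - y \<in> Cflat C" by simp
next
  assume h: "x - y \<in> Cflat C"
  have "m \<in> coset C y" if "m \<in> coset C x" and h: "x - y \<in> Cflat C" for m x y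
  proof -
    from that(1) obtain c where "m = x + c" "c \<in> Cflat C" unfolding coset_def by blast
    then show ?thesis unfolding coset_def using subspace_add[OF subspace_Cflat[OF L] h, of c]
      by (intro CollectI exI[of _ "x - y + c"]) (auto simp: algebra_simps)
  qed
  moreover have "y - x \<in> Cflat C" using subspace_neg[OF subspace_Cflat[OF L] h] by simp
  ultimately show "coset C x = coset C y" using h by blast
qed


lemma coset_add: assumes L: "linrel scale C"
  shows "coset C (a + b) = set_plus (coset C a) (coset C b)"
proof
  show "coset C (a + b) \<subseteq> set_plus (coset C a) (coset C b)"
  proof
    fix m assume "m \<in> coset C (a + b)"
    then obtain c where "m = a + b + c" "c \<in> Cflat C" unfolding coset_def by blast
    then show "m \<in> set_plus (coset C a) (coset C b)" unfolding set_plus_def coset_def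
      using subspace_0[OF subspace_Cflat[OF L]]
      by (intro CollectI exI[of _ "a + c"] exI[of _ "b + 0"]) (auto simp: ac_simps)
  qed
next
  show "set_plus (coset C a) (coset C b) \<subseteq> coset C (a + b)"
  proof
    fix m assume "m \<in> set_plus (coset C a) (coset C b)"
    then obtain c1 c2 where "m = (a + c1) + (b + c2)" "c1 \<in> Cflat C" "c2 \<in> Cflat C"
      unfolding set_plus_def coset_def by blast
    then show "m \<in> coset C (a + b)" unfolding coset_def
      using subspace_add[OF subspace_Cflat[OF L]]
      by (intro CollectI exI[of _ "c1 + c2"]) (auto simp: ac_simps)
  qed
qed

end

theorem lemma4p9:
  fixes sM :: "'r::comm_ring_1 \<Rightarrow> 'm::ab_group_add \<Rightarrow> 'm"
    and sX :: "'r \<Rightarrow> 'x::ab_group_add \<Rightarrow> 'x"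
    and C :: "('m \<times> 'm) set"
    and T :: "'x \<Rightarrow> 'x"
    and \<rho> :: "'x \<Rightarrow> 'm"
  assumes "module sM"
    and "linrel sM C"
    and red: "reduction sM C sX T \<rho>"
  shows "rel_morphism sX (graph T) sM C \<rho>
    \<and> (meets_in_radical C sX \<rho> \<longrightarrow>
         module.subspace sX (rad sX)
       \<and> T ` rad sX = rad sX
       \<and> (\<forall>x. coset C (\<rho> x) \<in> quot_carrier C)
       \<and> (\<forall>x y. coset C (\<rho> (x + y)) = set_plus (coset C (\<rho> x)) (coset C (\<rho> y)))
       \<and> (\<forall>r x. coset C (\<rho> (sX r x)) = coset C (sM r (\<rho> x)))
       \<and> (\<forall>x. quot_T C (coset C (\<rho> x)) = coset C (\<rho> (T x)))
       \<and> {x. coset C (\<rho> x) = coset C 0} = rad sX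
       \<and> (\<lambda>x. coset C (\<rho> x)) ` UNIV = quot_carrier C)"
proof -
  interpret M: module sM by fact
  note L = \<open>linrel sM C\<close>
  have lm: "laurent_module sX T" and hom: "module_hom sX sM \<rho>"
    and sharp: "Csharp C = set_plus (Cflat C) (range \<rho>)"
    and step: "\<And>x. (\<rho> x, \<rho> (T x)) \<in> C"
    using red unfolding reduction_def by auto
  interpret H: module_hom sX sM \<rho> by (rule hom)
  have bijT: "bij T" using lm unfolding laurent_module_def by auto
  have sC: "M.subspace (Cflat C)" by (rule M.subspace_Cflat[OF L])
  have sS: "M.subspace (Csharp C)" by (rule M.subspace_Csharp[OF L])
  have fs: "Cflat C \<subseteq> Csharp C" by (rule M.Cflat_sub[OF L])
  have rs: "\<rho> x \<in> Csharp C" for x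
    unfolding sharp set_plus_def using M.subspace_0[OF sC]
    by (intro CollectI exI[of _ 0] exI[of _ "\<rho> x"]) auto
  have part1: "rel_morphism sX (graph T) sM C \<rho>"
    unfolding rel_morphism_def graph_def using hom step by auto
  have fwd: "\<rho> (T x) \<in> Cflat C" if "\<rho> x \<in> Cflat C" for x
    using M.key[OF L that rs step] .
  have bwd: "\<rho> x \<in> Cflat C" if "\<rho> (T x) \<in> Cflat C" for x
    using M.key[OF M.linrel_conv[OF L], of "\<rho> (T x)" "\<rho> x"] that rs[of x] step[of x]
    unfolding M.Csharp_conv Cflat_conv by auto
  have part2: "module.subspace sX (rad sX)
       \<and> T ` rad sX = rad sX
       \<and> (\<forall>x. coset C (\<rho> x) \<in> quot_carrier C)
       \<and> (\<forall>x y. coset C (\<rho> (x + y)) = set_plus (coset C (\<rho> x)) (coset C (\<rho> y)))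
       \<and> (\<forall>r x. coset C (\<rho> (sX r x)) = coset C (sM r (\<rho> x)))
       \<and> (\<forall>x. quot_T C (coset C (\<rho> x)) = coset C (\<rho> (T x)))
       \<and> {x. coset C (\<rho> x) = coset C 0} = rad sX
       \<and> (\<lambda>x. coset C (\<rho> x)) ` UNIV = quot_carrier C"
    if mr: "meets_in_radical C sX \<rho>"
  proof (intro conjI allI)
    have radeq: "rad sX = {x. \<rho> x \<in> Cflat C}" using mr unfolding meets_in_radical_def by simp
    show "module.subspace sX (rad sX)" unfolding radeq
      by (rule H.subspace_linear_preimage[OF sC])
    show "T ` rad sX = rad sX"
    proof
      show "T ` rad sX \<subseteq> rad sX" unfolding radeq using fwd by auto
      show "rad sX \<subseteq> T ` rad sX"
      proof
        fix x assume x: "x \<in> rad sX"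
        obtain y where y: "x = T y" using bijT by (metis bij_pointE)
        then have "y \<in> rad sX" using x bwd unfolding radeq by auto
        then show "x \<in> T ` rad sX" using y by auto
      qed
    qed
    show "coset C (\<rho> x) \<in> quot_carrier C" for x
      unfolding quot_carrier_def using rs by auto
    show "coset C (\<rho> (x + y)) = set_plus (coset C (\<rho> x)) (coset C (\<rho> y))" for x y
      unfolding H.add by (rule M.coset_add[OF L])
    show "coset C (\<rho> (sX r x)) = coset C (sM r (\<rho> x))" for r x
      unfolding H.scale ..
    show "quot_T C (coset C (\<rho> x)) = coset C (\<rho> (T x))" for x
    proof
      show "quot_T C (coset C (\<rho> x)) \<subseteq> coset C (\<rho> (T x))"
      proof
        fix m' assume "m' \<in> quot_T C (coset C (\<rho> x))"
        then obtain m c c' n where m': "m' \<in> Csharp C" and m: "m = \<rho> x + c" "c \<in> Cflat C"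
          and n: "m' = c' + n" "c' \<in> Cflat C" "(m, n) \<in> C"
          unfolding quot_T_def coset_def set_plus_def by blast
        have "(m - \<rho> x, n - \<rho> (T x)) \<in> C" by (rule M.linrel_diff[OF L n(3) step])
        then have cn: "(c, n - \<rho> (T x)) \<in> C" using m by simp
        have "n - \<rho> (T x) = (m' - c') - \<rho> (T x)" using n by simp
        also have "\<dots> \<in> Csharp C" using M.subspace_diff[OF sS] m' fs n(2) rs by blast
        finally have "n - \<rho> (T x) \<in> Cflat C" using M.key[OF L m(2) _ cn] by simp
        then have "c' + (n - \<rho> (T x)) \<in> Cflat C" using M.subspace_add[OF sC n(2)] by simp
        then show "m' \<in> coset C (\<rho> (T x))" unfolding coset_def using n(1)
          by (intro CollectI exI[of _ "c' + (n - \<rho> (T x))"]) (auto simp: algebra_simps)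
      qed
      show "coset C (\<rho> (T x)) \<subseteq> quot_T C (coset C (\<rho> x))"
      proof
        fix m' assume "m' \<in> coset C (\<rho> (T x))"
        then obtain c where c: "m' = \<rho> (T x) + c" "c \<in> Cflat C" unfolding coset_def by blast
        have "m' \<in> Csharp C" using c M.subspace_add[OF sS rs] fs by blast
        moreover have "\<rho> x \<in> coset C (\<rho> x)" unfolding coset_def using M.subspace_0[OF sC]
          by force
        moreover have "m' \<in> set_plus (Cflat C) (C `` {\<rho> x})" unfolding set_plus_def
          using c step by (intro CollectI exI[of _ c] exI[of _ "\<rho> (T x)"]) (auto simp: add.commute)
        ultimately show "m' \<in> quot_T C (coset C (\<rho> x))" unfolding quot_T_def by blast
      qed
    qed
    show "{x. coset C (\<rho> x) = coset C 0} = rad sX"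
      unfolding radeq M.coset_eq[OF L] by simp
    show "(\<lambda>x. coset C (\<rho> x)) ` UNIV = quot_carrier C"
    proof
      show "(\<lambda>x. coset C (\<rho> x)) ` UNIV \<subseteq> quot_carrier C"
        unfolding quot_carrier_def using rs by auto
      show "quot_carrier C \<subseteq> (\<lambda>x. coset C (\<rho> x)) ` UNIV"
      proof
        fix q assume "q \<in> quot_carrier C"
        then obtain m where q: "q = coset C m" "m \<in> Csharp C" unfolding quot_carrier_def by blast
        then obtain c x where "m = c + \<rho> x" "c \<in> Cflat C" unfolding sharp set_plus_def by blast
        then have "coset C m = coset C (\<rho> x)" unfolding M.coset_eq[OF L] by simp
        then show "q \<in> (\<lambda>x. coset C (\<rho> x)) ` UNIV" using q by auto
      qed
    qed
  qed
  show ?thesis using part1 part2 by blast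
qed

end
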